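(* Let $D$ be a quasilocal API-domain with quotient field $K$ and let $L$ be a subfield of $K$. Then $D\cap L$ is a quasilocal API-domain.
   Context: An API-domain is an integral domain in which for every nonempty subset $\{d_\alpha\}$ of nonzero elements there is a natural number $n$ with the ideal generated by $\{d_\alpha^n\}$ principal. Quasilocal: unique maximal ideal. *)

theory Defs
  imports "HOL-Algebra.Algebra"
begin

definition API_domain :: "('a, 'b) ring_scheme \<Rightarrow> bool" where
  "API_domain R \<longleftrightarrow> domain R \<and>
     (\<forall>S. S \<noteq> {} \<longrightarrow> S \<subseteq> carrier R - {\<zero>\<^bsub>R\<^esub>} \<longrightarrow>
        (\<exists>n::nat. n \<ge> 1 \<and> principalideal (genideal R ((\<lambda>d. d [^]\<^bsub>R\<^esub> n) ` S)) R))"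

definition quasilocal :: "('a, 'b) ring_scheme \<Rightarrow> bool" where
  "quasilocal R \<longleftrightarrow> (\<exists>!M. maximalideal M R)"

end

theory Submission
  imports Defs
begin

lemma sub_a_inv:
  fixes K (structure)
  assumes "ring K" "subring H K" "x \<in> H"
  shows "\<ominus>\<^bsub>K\<lparr>carrier:=H\<rparr>\<^esub> x = \<ominus>\<^bsub>K\<^esub> x"
proof -
  interpret ring K by fact
  interpret S: ring "K\<lparr>carrier:=H\<rparr>" using subring_is_ring[OF assms(2)] .
  have y: "\<ominus>\<^bsub>K\<lparr>carrier:=H\<rparr>\<^esub> x \<in> H" using S.a_inv_closed assms(3) by simp
  have "x \<oplus> \<ominus>\<^bsub>K\<lparr>carrier:=H\<rparr>\<^esub> x = \<zero>" using S.r_neg assms(3) by simp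
  moreover have "H \<subseteq> carrier K" using subringE(1)[OF assms(2)] .
  ultimately show ?thesis using y assms(3)
    by (metis a_comm minus_equality subsetD)
qed

lemma ideal_crit:
  fixes R (structure)
  assumes "ring R" "I \<subseteq> carrier R" "\<zero> \<in> I" "\<And>x y. x\<in>I \<Longrightarrow> y\<in>I \<Longrightarrow> x \<oplus> y \<in> I"
    "\<And>x. x \<in> I \<Longrightarrow> \<ominus> x \<in> I" "\<And>x a. x \<in> I \<Longrightarrow> a \<in> carrier R \<Longrightarrow> a \<otimes> x \<in> I"
    "\<And>x a. x \<in> I \<Longrightarrow> a \<in> carrier R \<Longrightarrow> x \<otimes> a \<in> I"
  shows "ideal I R"
proof (rule idealI[OF assms(1)])
  show "subgroup I (add_monoid R)"
    using assms by (intro subgroup.intro) (auto simp: a_inv_def)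
qed (use assms in auto)

lemma local_units:
  fixes K (structure)
  assumes "field K" "subring A K" "quasilocal (K\<lparr>carrier:=A\<rparr>)"
    "maximalideal M (K\<lparr>carrier:=A\<rparr>)" "x \<in> A" "x \<notin> M"
  shows "inv x \<in> A"
proof (rule ccontr)
  assume ninv: "inv x \<notin> A"
  interpret field K by fact
  interpret A: domain "K\<lparr>carrier:=A\<rparr>" using subring_is_domain[OF assms(2)] .
  have AK: "A \<subseteq> carrier K" using subringE(1)[OF assms(2)] .
  have x0: "x \<noteq> \<zero>"
    using assms(4,6) additive_subgroup.zero_closed[OF ideal.axioms(1)[OF maximalideal.axioms(1)]]
    by fastforce
  define FF where "FF = {J. ideal J (K\<lparr>carrier:=A\<rparr>) \<and> x \<in> J \<and> \<one> \<notin> J}"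
  have "PIdl\<^bsub>K\<lparr>carrier:=A\<rparr>\<^esub> x \<in> FF"
  proof -
    have "ideal (PIdl\<^bsub>K\<lparr>carrier:=A\<rparr>\<^esub> x) (K\<lparr>carrier:=A\<rparr>)"
      using A.cgenideal_ideal assms(5) by simp
    moreover have "x \<in> PIdl\<^bsub>K\<lparr>carrier:=A\<rparr>\<^esub> x" using A.cgenideal_self assms(5) by simp
    moreover have "\<one> \<notin> PIdl\<^bsub>K\<lparr>carrier:=A\<rparr>\<^esub> x"
    proof
      assume "\<one> \<in> PIdl\<^bsub>K\<lparr>carrier:=A\<rparr>\<^esub> x"
      then obtain y where y: "y \<in> A" "\<one> = y \<otimes> x" unfolding cgenideal_def by auto
      then have "inv x = y" using comm_inv_char AK assms(5) m_comm by (metis subsetD)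
      then show False using ninv y by simp
    qed
    ultimately show ?thesis unfolding FF_def by simp
  qed
  then have Fne: "FF \<noteq> {}" by blast
  have "\<exists>N\<in>FF. \<forall>Y\<in>FF. N \<subseteq> Y \<longrightarrow> Y = N"
  proof (rule subset_Zorn_nonempty[OF Fne])
    fix C assume Cne: "C \<noteq> {}" and ch: "subset.chain FF C"
    have "subset.chain {I. ideal I (K\<lparr>carrier:=A\<rparr>)} C"
      using ch unfolding pred_on.chain_def FF_def by auto
    from A.chain_Union_is_ideal[OF this] Cne have "ideal (\<Union>C) (K\<lparr>carrier:=A\<rparr>)" by simp
    moreover have "x \<in> \<Union>C" using Cne ch unfolding pred_on.chain_def FF_def by auto
    moreover have "\<one> \<notin> \<Union>C" using ch unfolding pred_on.chain_def FF_def by auto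
    ultimately show "\<Union>C \<in> FF" unfolding FF_def by simp
  qed
  then obtain N where N: "N \<in> FF" and Nmax: "\<And>Y. Y \<in> FF \<Longrightarrow> N \<subseteq> Y \<Longrightarrow> Y = N" by blast
  have "maximalideal N (K\<lparr>carrier:=A\<rparr>)"
  proof (rule maximalidealI)
    show "ideal N (K\<lparr>carrier:=A\<rparr>)" using N FF_def by simp
    show "carrier (K\<lparr>carrier:=A\<rparr>) \<noteq> N" using N FF_def A.one_closed by auto
    fix J assume J: "ideal J (K\<lparr>carrier:=A\<rparr>)" "N \<subseteq> J" "J \<subseteq> carrier (K\<lparr>carrier:=A\<rparr>)"
    show "J = N \<or> J = carrier (K\<lparr>carrier:=A\<rparr>)"
    proof (cases "\<one> \<in> J")
      case True
      then show ?thesis using ideal.one_imp_carrier[OF J(1)] by simp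
    next
      case False
      then have "J \<in> FF" using J N unfolding FF_def by auto
      then show ?thesis using Nmax J by simp
    qed
  qed
  then have "N = M" using assms(3,4) unfolding quasilocal_def by blast
  then show False using N FF_def assms(6) by simp
qed

lemma pow_nz:
  fixes K (structure)
  assumes "domain K" "x \<in> carrier K" "x \<noteq> \<zero>"
  shows "x [^] (n::nat) \<noteq> \<zero>"
proof -
  interpret domain K by fact
  show ?thesis by (induct n) (use assms integral in auto)
qed

theorem theorem4:
  fixes K (structure) and D L :: "'a set"
  assumes "field K"
    and "subdomain D K"
    and "\<forall>x \<in> carrier K. \<exists>a \<in> D. \<exists>b \<in> D. b \<noteq> \<zero> \<and> x = a \<otimes> inv b"
    and "API_domain (K\<lparr>carrier := D\<rparr>)"
    and "quasilocal (K\<lparr>carrier := D\<rparr>)"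
    and "subfield L K"
  shows "API_domain (K\<lparr>carrier := D \<inter> L\<rparr>) \<and> quasilocal (K\<lparr>carrier := D \<inter> L\<rparr>)"
proof -
  interpret field K by fact
  have Dsub: "subring D K" using subcring.axioms(1)[OF subdomain.axioms(1)[OF assms(2)]] .
  have Lsub: "subring L K" using subfieldE(1)[OF assms(6)] .
  have Esub: "subring (D \<inter> L) K" using subring_inter[OF Dsub Lsub] .
  have DK: "D \<subseteq> carrier K" using subringE(1)[OF Dsub] .
  have LK: "L \<subseteq> carrier K" using subringE(1)[OF Lsub] .
  interpret Dd: domain "K\<lparr>carrier:=D\<rparr>" using subring_is_domain[OF Dsub] .
  interpret Ed: domain "K\<lparr>carrier:=D \<inter> L\<rparr>" using subring_is_domain[OF Esub] .
  have invf: "inv x \<in> carrier K \<and> x \<otimes> inv x = \<one> \<and> inv x \<otimes> x = \<one>"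
    if "x \<in> carrier K" "x \<noteq> \<zero>" for x
    using that field_Units Units_inv_closed Units_r_inv Units_l_inv by auto
  have invL: "inv x \<in> L" if "x \<in> L" "x \<noteq> \<zero>" for x
    using subfield_m_inv(1)[OF assms(6)] that by auto
  obtain M where M: "maximalideal M (K\<lparr>carrier:=D\<rparr>)"
    and Muniq: "\<And>M'. maximalideal M' (K\<lparr>carrier:=D\<rparr>) \<Longrightarrow> M' = M"
    using assms(5) unfolding quasilocal_def by blast
  have loc: "inv x \<in> D" if "x \<in> D" "x \<notin> M" for x
    using local_units[OF assms(1) Dsub assms(5) M that] .
  have Mid: "ideal M (K\<lparr>carrier:=D\<rparr>)" using maximalideal.axioms(1)[OF M] .
  have MD: "M \<subseteq> D" using additive_subgroup.a_subset[OF ideal.axioms(1)[OF Mid]] by simp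
  have M0: "\<zero> \<in> M" using additive_subgroup.zero_closed[OF ideal.axioms(1)[OF Mid]] by simp
  have M1: "\<one> \<notin> M"
  proof
    assume "\<one> \<in> M"
    then have "M = D" using ideal.one_imp_carrier[OF Mid] by simp
    then show False using maximalideal.I_notcarr[OF M] by simp
  qed
  have Madd: "x \<oplus> y \<in> M" if "x \<in> M" "y \<in> M" for x y
    using additive_subgroup.a_closed[OF ideal.axioms(1)[OF Mid]] that by simp
  have Mneg: "\<ominus> x \<in> M" if "x \<in> M" for x
    using additive_subgroup.a_inv_closed[OF ideal.axioms(1)[OF Mid] that]
      sub_a_inv[OF ring_axioms Dsub] that MD by auto
  have Mmul: "a \<otimes> x \<in> M" if "x \<in> M" "a \<in> D" for x a
    using ideal.I_l_closed[OF Mid] that by simp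
  have Mmulr: "x \<otimes> a \<in> M" if "x \<in> M" "a \<in> D" for x a
    using ideal.I_r_closed[OF Mid] that by simp
  have quasi: "quasilocal (K\<lparr>carrier := D \<inter> L\<rparr>)"
  proof -
    have Nid: "ideal (M \<inter> L) (K\<lparr>carrier := D \<inter> L\<rparr>)"
    proof (rule ideal_crit[OF Ed.ring_axioms])
      show "M \<inter> L \<subseteq> carrier (K\<lparr>carrier := D \<inter> L\<rparr>)" using MD by auto
      show "\<zero>\<^bsub>K\<lparr>carrier := D \<inter> L\<rparr>\<^esub> \<in> M \<inter> L" using M0 subringE(2)[OF Lsub] by simp
      show "x \<oplus>\<^bsub>K\<lparr>carrier := D \<inter> L\<rparr>\<^esub> y \<in> M \<inter> L" if "x \<in> M \<inter> L" "y \<in> M \<inter> L" for x y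
        using that Madd subringE(7)[OF Lsub] by simp
      show "\<ominus>\<^bsub>K\<lparr>carrier := D \<inter> L\<rparr>\<^esub> x \<in> M \<inter> L" if "x \<in> M \<inter> L" for x
        using that Mneg subringE(5)[OF Lsub] sub_a_inv[OF ring_axioms Esub, of x] MD by auto
      show "a \<otimes>\<^bsub>K\<lparr>carrier := D \<inter> L\<rparr>\<^esub> x \<in> M \<inter> L" if "x \<in> M \<inter> L" "a \<in> carrier (K\<lparr>carrier := D \<inter> L\<rparr>)" for x a
        using that Mmul subringE(6)[OF Lsub] by simp
      show "x \<otimes>\<^bsub>K\<lparr>carrier := D \<inter> L\<rparr>\<^esub> a \<in> M \<inter> L" if "x \<in> M \<inter> L" "a \<in> carrier (K\<lparr>carrier := D \<inter> L\<rparr>)" for x a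
        using that Mmulr subringE(6)[OF Lsub] by simp
    qed
    have key: "J = carrier (K\<lparr>carrier := D \<inter> L\<rparr>)"
      if J: "ideal J (K\<lparr>carrier := D \<inter> L\<rparr>)" "x \<in> J" "x \<notin> M" for J x
    proof -
      have xE: "x \<in> D \<inter> L" using J additive_subgroup.a_subset[OF ideal.axioms(1)[OF J(1)]] by auto
      have x0: "x \<noteq> \<zero>" using M0 J(3) by auto
      have "inv x \<in> D \<inter> L" using loc invL xE x0 J(3) by auto
      then have "inv x \<otimes> x \<in> J" using ideal.I_l_closed[OF J(1) J(2)] by simp
      then have "\<one> \<in> J" using invf xE x0 DK by auto
      then show ?thesis using ideal.one_imp_carrier[OF J(1)] by simp
    qed
    have Nmax: "maximalideal (M \<inter> L) (K\<lparr>carrier := D \<inter> L\<rparr>)"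
    proof (rule maximalidealI[OF Nid])
      show "carrier (K\<lparr>carrier := D \<inter> L\<rparr>) \<noteq> M \<inter> L"
        using M1 subringE(3)[OF Esub] by auto
      fix J assume J: "ideal J (K\<lparr>carrier := D \<inter> L\<rparr>)" "M \<inter> L \<subseteq> J" "J \<subseteq> carrier (K\<lparr>carrier := D \<inter> L\<rparr>)"
      show "J = M \<inter> L \<or> J = carrier (K\<lparr>carrier := D \<inter> L\<rparr>)"
      proof (cases "J \<subseteq> M")
        case True
        then have "J = M \<inter> L" using J by auto
        then show ?thesis by simp
      next
        case False
        then obtain x where "x \<in> J" "x \<notin> M" by auto
        then show ?thesis using key J(1) by blast
      qed
    qed
    have "N' = M \<inter> L" if N': "maximalideal N' (K\<lparr>carrier := D \<inter> L\<rparr>)" for N'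
    proof -
      have N'id: "ideal N' (K\<lparr>carrier := D \<inter> L\<rparr>)" using maximalideal.axioms(1)[OF N'] .
      have sub: "N' \<subseteq> M \<inter> L"
      proof
        fix x assume x: "x \<in> N'"
        have xE: "x \<in> D \<inter> L" using x additive_subgroup.a_subset[OF ideal.axioms(1)[OF N'id]] by auto
        show "x \<in> M \<inter> L"
        proof (rule ccontr)
          assume "x \<notin> M \<inter> L"
          then have "x \<notin> M" using xE by auto
          then have "N' = carrier (K\<lparr>carrier := D \<inter> L\<rparr>)" using key[OF N'id x] by simp
          then show False using maximalideal.I_notcarr[OF N'] by simp
        qed
      qed
      have "M \<inter> L = N' \<or> M \<inter> L = carrier (K\<lparr>carrier := D \<inter> L\<rparr>)"
        using maximalideal.I_maximal[OF N' Nid sub] MD by auto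
      then show ?thesis using maximalideal.I_notcarr[OF Nmax] by auto
    qed
    then show ?thesis unfolding quasilocal_def using Nmax by blast
  qed

  have powc: "\<And>x n H. x [^]\<^bsub>K\<lparr>carrier:=H\<rparr>\<^esub> (n::nat) = x [^] n"
    using nat_pow_consistent by simp
  have api: "API_domain (K\<lparr>carrier := D \<inter> L\<rparr>)"
    unfolding API_domain_def
  proof (intro conjI allI impI)
    show "domain (K\<lparr>carrier := D \<inter> L\<rparr>)" by (rule Ed.domain_axioms)
    fix S assume Sne: "S \<noteq> {}" and SE: "S \<subseteq> carrier (K\<lparr>carrier := D \<inter> L\<rparr>) - {\<zero>\<^bsub>K\<lparr>carrier := D \<inter> L\<rparr>\<^esub>}"
    have SE': "S \<subseteq> D \<inter> L - {\<zero>}" using SE by simp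
    have "S \<subseteq> carrier (K\<lparr>carrier := D\<rparr>) - {\<zero>\<^bsub>K\<lparr>carrier := D\<rparr>\<^esub>}" using SE' by auto
    then obtain n :: nat where n1: "n \<ge> 1"
      and pr: "principalideal (genideal (K\<lparr>carrier := D\<rparr>) ((\<lambda>d. d [^]\<^bsub>K\<lparr>carrier := D\<rparr>\<^esub> n) ` S)) (K\<lparr>carrier := D\<rparr>)"
      using assms(4) Sne unfolding API_domain_def by blast
    define T where "T = (\<lambda>d. d [^] n) ` S"
    have pr': "principalideal (genideal (K\<lparr>carrier := D\<rparr>) T) (K\<lparr>carrier := D\<rparr>)"
      using pr unfolding T_def powc .
    have TE: "T \<subseteq> D \<inter> L"
    proof
      fix t assume "t \<in> T"
      then obtain s where s: "s \<in> S" "t = s [^] n" unfolding T_def by auto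
      have "s [^]\<^bsub>K\<lparr>carrier := D \<inter> L\<rparr>\<^esub> n \<in> D \<inter> L" using Ed.nat_pow_closed s SE' by auto
      then show "t \<in> D \<inter> L" using s powc by simp
    qed
    have T0: "t \<noteq> \<zero>" if tT: "t \<in> T" for t
    proof -
      obtain s where s: "s \<in> S" "t = s [^] n" using tT unfolding T_def by auto
      then show ?thesis using pow_nz[OF domain_axioms, of s n] SE' DK by auto
    qed
    have Tne: "T \<noteq> {}" using Sne T_def by simp
    obtain c where cD: "c \<in> D" and ceq: "genideal (K\<lparr>carrier := D\<rparr>) T = genideal (K\<lparr>carrier := D\<rparr>) {c}"
      using principalideal.generate[OF pr'] by auto
    have ceq': "genideal (K\<lparr>carrier := D\<rparr>) T = PIdl\<^bsub>K\<lparr>carrier := D\<rparr>\<^esub> c"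
      using ceq Dd.cgenideal_eq_genideal cD by simp
    have TD: "T \<subseteq> carrier (K\<lparr>carrier := D\<rparr>)" using TE by auto
    have Tc: "\<exists>t'\<in>D. t = t' \<otimes> c" if "t \<in> T" for t
    proof -
      have "t \<in> PIdl\<^bsub>K\<lparr>carrier := D\<rparr>\<^esub> c" using Dd.genideal_self[OF TD] that ceq' by auto
      then show ?thesis unfolding cgenideal_def by auto
    qed
    have cI: "c \<in> genideal (K\<lparr>carrier := D\<rparr>) T" using ceq' Dd.cgenideal_self cD by simp
    have c0: "c \<noteq> \<zero>"
    proof
      assume "c = \<zero>"
      obtain t where t: "t \<in> T" using Tne by auto
      then obtain t' where "t' \<in> D" "t = t' \<otimes> c" using Tc by auto
      then show False using T0[OF t] \<open>c = \<zero>\<close> DK by auto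
    qed
    have cK: "c \<in> carrier K" using cD DK by auto
    have "\<exists>t\<in>T. \<exists>u\<in>D. t = u \<otimes> c \<and> u \<notin> M"
    proof (rule ccontr)
      assume nex: "\<not> ?thesis"
      define J where "J = {m \<otimes> c | m. m \<in> M}"
      have Jid: "ideal J (K\<lparr>carrier := D\<rparr>)"
      proof (rule ideal_crit[OF Dd.ring_axioms])
        show "J \<subseteq> carrier (K\<lparr>carrier := D\<rparr>)" using MD cD subringE(6)[OF Dsub] unfolding J_def by auto
        show "\<zero>\<^bsub>K\<lparr>carrier := D\<rparr>\<^esub> \<in> J" unfolding J_def using M0 cK by (auto intro!: exI[of _ \<zero>])
        show "x \<oplus>\<^bsub>K\<lparr>carrier := D\<rparr>\<^esub> y \<in> J" if hx: "x \<in> J" "y \<in> J" for x y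
        proof -
          obtain a b where "a \<in> M" "b \<in> M" "x = a \<otimes> c" "y = b \<otimes> c" using hx unfolding J_def by auto
          moreover have "a \<in> carrier K" "b \<in> carrier K" using calculation MD DK by auto
          ultimately show ?thesis unfolding J_def using Madd cK
            by (auto intro!: exI[of _ "a \<oplus> b"] simp: l_distr)
        qed
        show "\<ominus>\<^bsub>K\<lparr>carrier := D\<rparr>\<^esub> x \<in> J" if hx: "x \<in> J" for x
        proof -
          obtain a where a: "a \<in> M" "x = a \<otimes> c" using hx unfolding J_def by auto
          have "x \<in> D" using a MD cD subringE(6)[OF Dsub] by auto
          then have "\<ominus>\<^bsub>K\<lparr>carrier := D\<rparr>\<^esub> x = \<ominus> x" using sub_a_inv[OF ring_axioms Dsub] by simp
          then show ?thesis unfolding J_def using a Mneg MD DK cK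
            by (auto intro!: exI[of _ "\<ominus> a"] simp: l_minus)
        qed
        show "a \<otimes>\<^bsub>K\<lparr>carrier := D\<rparr>\<^esub> x \<in> J" if hx: "x \<in> J" "a \<in> carrier (K\<lparr>carrier := D\<rparr>)" for x a
        proof -
          obtain b where b: "b \<in> M" "x = b \<otimes> c" using hx unfolding J_def by auto
          moreover have "b \<in> carrier K" "a \<in> carrier K" using b hx MD DK by auto
          ultimately show ?thesis unfolding J_def using hx Mmul MD DK cK
            by (auto intro!: exI[of _ "a \<otimes> b"] simp: m_assoc)
        qed
        show "x \<otimes>\<^bsub>K\<lparr>carrier := D\<rparr>\<^esub> a \<in> J" if hx: "x \<in> J" "a \<in> carrier (K\<lparr>carrier := D\<rparr>)" for x a
        proof -
          obtain b where b: "b \<in> M" "x = b \<otimes> c" using hx unfolding J_def by auto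
          moreover have "b \<in> carrier K" "a \<in> carrier K" using b hx MD DK by auto
          ultimately show ?thesis unfolding J_def using hx Mmulr MD DK cK
            by (auto intro!: exI[of _ "b \<otimes> a"] simp: m_assoc m_comm m_lcomm)
        qed
      qed
      have "T \<subseteq> J"
      proof
        fix t assume t: "t \<in> T"
        then obtain u where "u \<in> D" "t = u \<otimes> c" using Tc by auto
        then show "t \<in> J" using nex t unfolding J_def by auto
      qed
      then have "genideal (K\<lparr>carrier := D\<rparr>) T \<subseteq> J" using Dd.genideal_minimal[OF Jid] by simp
      then obtain m where m: "m \<in> M" "c = m \<otimes> c" using cI unfolding J_def by auto
      have mK: "m \<in> carrier K" using m MD DK by auto
      have "m = m \<otimes> (c \<otimes> inv c)" using invf[OF cK c0] mK by simp
      also have "\<dots> = (m \<otimes> c) \<otimes> inv c" using invf[OF cK c0] mK cK by (simp add: m_assoc)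
      also have "\<dots> = \<one>" using m invf[OF cK c0] by simp
      finally show False using m M1 by simp
    qed
    then obtain t0 u where t0: "t0 \<in> T" and uD: "u \<in> D" and t0eq: "t0 = u \<otimes> c" and uM: "u \<notin> M" by blast
    have iu: "inv u \<in> D" using loc uD uM .
    have uK: "u \<in> carrier K" using uD DK by auto
    have u0: "u \<noteq> \<zero>" using uM M0 by auto
    have t0E: "t0 \<in> D \<inter> L" using t0 TE by auto
    have t0K: "t0 \<in> carrier K" using t0E DK by auto
    have t00: "t0 \<noteq> \<zero>" using T0 t0 .
    have inT: "t \<in> PIdl\<^bsub>K\<lparr>carrier := D \<inter> L\<rparr>\<^esub> t0" if t: "t \<in> T" for t
    proof -
      obtain t' where t': "t' \<in> D" "t = t' \<otimes> c" using Tc t by auto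
      have t'K: "t' \<in> carrier K" using t' DK by auto
      have iuK: "inv u \<in> carrier K" using iu DK by auto
      define q where "q = t' \<otimes> inv u"
      have qD: "q \<in> D" using t' iu subringE(6)[OF Dsub] q_def by simp
      have qK: "q \<in> carrier K" using qD DK by auto
      have tq: "t = q \<otimes> t0"
      proof -
        have "q \<otimes> t0 = t' \<otimes> (inv u \<otimes> u) \<otimes> c" unfolding q_def t0eq using t'K iuK uK cK by (simp add: m_assoc)
        also have "\<dots> = t" using invf[OF uK u0] t'K t' by simp
        finally show ?thesis by simp
      qed
      have tE: "t \<in> D \<inter> L" using t TE by auto
      have "q = t \<otimes> inv t0"
      proof -
        have "t \<otimes> inv t0 = q \<otimes> (t0 \<otimes> inv t0)" using tq qK t0K invf[OF t0K t00] by (simp add: m_assoc)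
        also have "\<dots> = q" using invf[OF t0K t00] qK by simp
        finally show ?thesis by simp
      qed
      then have "q \<in> L" using tE invL[of t0] t0E t00 subringE(6)[OF Lsub] by auto
      then show ?thesis unfolding cgenideal_def using tq qD by auto
    qed
    have TE': "T \<subseteq> carrier (K\<lparr>carrier := D \<inter> L\<rparr>)" using TE by simp
    have t0E': "t0 \<in> carrier (K\<lparr>carrier := D \<inter> L\<rparr>)" using t0E by simp
    have "genideal (K\<lparr>carrier := D \<inter> L\<rparr>) T \<subseteq> PIdl\<^bsub>K\<lparr>carrier := D \<inter> L\<rparr>\<^esub> t0"
      using Ed.genideal_minimal[OF Ed.cgenideal_ideal[OF t0E']] inT by auto
    moreover have "genideal (K\<lparr>carrier := D \<inter> L\<rparr>) {t0} \<subseteq> genideal (K\<lparr>carrier := D \<inter> L\<rparr>) T"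
    proof (rule Ed.genideal_minimal[OF Ed.genideal_ideal[OF TE']])
      show "{t0} \<subseteq> genideal (K\<lparr>carrier := D \<inter> L\<rparr>) T" using Ed.genideal_self[OF TE'] t0 by auto
    qed
    ultimately have eq: "genideal (K\<lparr>carrier := D \<inter> L\<rparr>) T = genideal (K\<lparr>carrier := D \<inter> L\<rparr>) {t0}"
      using Ed.cgenideal_eq_genideal[OF t0E'] by auto
    have "principalideal (genideal (K\<lparr>carrier := D \<inter> L\<rparr>) T) (K\<lparr>carrier := D \<inter> L\<rparr>)"
      by (rule principalidealI[OF Ed.genideal_ideal[OF TE']]) (use eq t0E' in blast)
    then show "\<exists>n::nat. n \<ge> 1 \<and> principalideal (genideal (K\<lparr>carrier := D \<inter> L\<rparr>)
        ((\<lambda>d. d [^]\<^bsub>K\<lparr>carrier := D \<inter> L\<rparr>\<^esub> n) ` S)) (K\<lparr>carrier := D \<inter> L\<rparr>)"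
      using n1 unfolding T_def powc by blast
  qed
  show ?thesis using api quasi by simp
qed

end
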